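(* Let $\mathcal{G}$ be a groupoid, $\mathbb{K}$ a field, and $\sigma :\mathcal{G} \times\mathcal{G} \to \mathbb{K}$ a map taking only the values $0$ and $1$, with $\sigma(e,e) = 1$ for all $e \in \mathcal{G}_0$, and such that for all $(x,y) \in \mathrm{dom}\,\sigma$, $$(xy,y^{-1}),\ (y^{-1},x^{-1}),\ (x,d(x)) \in \mathrm{dom}\,\sigma.$$ Let $(a,b),(c,f) \in \mathcal{G}^2$ be such that $\sigma(a,b) = 0$ and $\{ a^{-1}, b \} \subseteq \{ d(c), c^{-1}, f \}$. Then $\sigma(c,f) = 0$.
   Context: A groupoid is a nonempty set $\mathcal{G}$ with a partial associative product, each $g$ having right identity $d(g)=g^{-1}g$, left identity $r(g)=gg^{-1}$ and inverse $g^{-1}$; $xy$ is defined iff $d(x)=r(y)$; $\mathcal{G}_0$ is the set of identities and $\mathcal{G}^2$ the set of composable pairs. For such $\sigma$, $\mathrm{dom}\,\sigma=\{(x,y)\in\mathcal{G}\times\mathcal{G}:\sigma(x,y)\neq0\}$. *)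

theory Defs
  imports Main
begin

text \<open>A groupoid is given by a carrier set G, a product m (meaningful only on
composable pairs) and an inverse map i.\<close>

definition gd :: "('a \<Rightarrow> 'a \<Rightarrow> 'a) \<Rightarrow> ('a \<Rightarrow> 'a) \<Rightarrow> 'a \<Rightarrow> 'a" where
  "gd m i x = m (i x) x"

definition gr :: "('a \<Rightarrow> 'a \<Rightarrow> 'a) \<Rightarrow> ('a \<Rightarrow> 'a) \<Rightarrow> 'a \<Rightarrow> 'a" where
  "gr m i x = m x (i x)"

definition composable :: "'a set \<Rightarrow> ('a \<Rightarrow> 'a \<Rightarrow> 'a) \<Rightarrow> ('a \<Rightarrow> 'a) \<Rightarrow> ('a \<times> 'a) set" where
  "composable G m i = {(x, y). x \<in> G \<and> y \<in> G \<and> gd m i x = gr m i y}"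

definition units :: "'a set \<Rightarrow> ('a \<Rightarrow> 'a \<Rightarrow> 'a) \<Rightarrow> ('a \<Rightarrow> 'a) \<Rightarrow> 'a set" where
  "units G m i = gd m i ` G"

definition groupoid :: "'a set \<Rightarrow> ('a \<Rightarrow> 'a \<Rightarrow> 'a) \<Rightarrow> ('a \<Rightarrow> 'a) \<Rightarrow> bool" where
  "groupoid G m i \<longleftrightarrow>
     G \<noteq> {} \<and>
     (\<forall>x\<in>G. i x \<in> G \<and> i (i x) = x) \<and>
     (\<forall>x y. (x, y) \<in> composable G m i \<longrightarrow> m x y \<in> G) \<and>
     (\<forall>x y z. (x, y) \<in> composable G m i \<and> (y, z) \<in> composable G m i \<longrightarrow>
        (m x y, z) \<in> composable G m i \<and> (x, m y z) \<in> composable G m i \<and>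
        m (m x y) z = m x (m y z)) \<and>
     (\<forall>x y. (x, y) \<in> composable G m i \<longrightarrow>
        m (i x) (m x y) = y \<and> m (m x y) (i y) = x)"

definition sdom :: "'a set \<Rightarrow> ('a \<Rightarrow> 'a \<Rightarrow> 'k::zero) \<Rightarrow> ('a \<times> 'a) set" where
  "sdom G \<sigma> = {(x, y). x \<in> G \<and> y \<in> G \<and> \<sigma> x y \<noteq> 0}"

end

theory Submission
  imports Defs
begin

locale gpd =
  fixes G :: "'a set" and m :: "'a \<Rightarrow> 'a \<Rightarrow> 'a" and i :: "'a \<Rightarrow> 'a"
  assumes grp: "groupoid G m i"
begin

abbreviation C where "C x y \<equiv> (x, y) \<in> composable G m i"

lemma ax1: "\<forall>x\<in>G. i x \<in> G \<and> i (i x) = x"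
  using grp unfolding groupoid_def by (elim conjE) assumption
lemma ax2: "\<forall>x y. (x, y) \<in> composable G m i \<longrightarrow> m x y \<in> G"
  using grp unfolding groupoid_def by (elim conjE) assumption
lemma ax3: "\<forall>x y z. (x, y) \<in> composable G m i \<and> (y, z) \<in> composable G m i \<longrightarrow>
        (m x y, z) \<in> composable G m i \<and> (x, m y z) \<in> composable G m i \<and>
        m (m x y) z = m x (m y z)"
  using grp unfolding groupoid_def by (elim conjE) assumption
lemma ax4: "\<forall>x y. (x, y) \<in> composable G m i \<longrightarrow>
        m (i x) (m x y) = y \<and> m (m x y) (i y) = x"
  using grp unfolding groupoid_def by (elim conjE) assumption

lemma inv: "x \<in> G \<Longrightarrow> i x \<in> G \<and> i (i x) = x"
  by (rule ax1[rule_format])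

lemma CG: "C x y \<Longrightarrow> x \<in> G \<and> y \<in> G \<and> gd m i x = gr m i y"
  unfolding composable_def by auto

lemma mG: "C x y \<Longrightarrow> m x y \<in> G"
  by (rule ax2[rule_format])

lemma canc: "C x y \<Longrightarrow> m (i x) (m x y) = y \<and> m (m x y) (i y) = x"
  by (rule ax4[rule_format])

lemma assoc: "C x y \<Longrightarrow> C y z \<Longrightarrow> C (m x y) z \<and> C x (m y z) \<and> m (m x y) z = m x (m y z)"
  by (rule ax3[rule_format, OF conjI])

lemma gd_inv: "x \<in> G \<Longrightarrow> gd m i (i x) = gr m i x"
  using inv[of x] unfolding gd_def gr_def by simp

lemma gr_inv: "x \<in> G \<Longrightarrow> gr m i (i x) = gd m i x"
  using inv[of x] unfolding gd_def gr_def by simp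

lemma C1: "x \<in> G \<Longrightarrow> C (i x) x"
  using inv[of x] gd_inv[of x] unfolding composable_def by simp

lemma C2: "x \<in> G \<Longrightarrow> C x (i x)"
  using inv[of x] gr_inv[of x] unfolding composable_def by simp

lemma Cinv: "C x y \<Longrightarrow> C (i y) (i x)"
proof -
  assume h: "C x y"
  then have "x \<in> G" "y \<in> G" "gd m i x = gr m i y" using CG by blast+
  then show ?thesis using inv[of x] inv[of y] gd_inv[of y] gr_inv[of x]
    unfolding composable_def by simp
qed

lemma gdG: "x \<in> G \<Longrightarrow> gd m i x \<in> G"
  using mG[OF C1] unfolding gd_def by auto

lemma grG: "x \<in> G \<Longrightarrow> gr m i x \<in> G"
  using mG[OF C2] unfolding gr_def by auto

lemma rx: "x \<in> G \<Longrightarrow> m (gr m i x) x = x"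
  using canc[OF C2[of x]] inv[of x] unfolding gr_def by auto

lemma xd: "x \<in> G \<Longrightarrow> m x (gd m i x) = x"
  using canc[OF C1[of x]] inv[of x] unfolding gd_def by auto

lemma dxi: "x \<in> G \<Longrightarrow> m (gd m i x) (i x) = i x"
  using canc[OF C1[of x]] inv[of x] unfolding gd_def by auto


lemma Cxd: "x \<in> G \<Longrightarrow> C x (gd m i x)"
  using assoc[OF C2[of x] C1[of x]] unfolding gd_def by auto

lemma inv_gd: "x \<in> G \<Longrightarrow> i (gd m i x) = gd m i x"
proof -
  assume x: "x \<in> G"
  let ?e = "gd m i x"
  have eG: "?e \<in> G" using gdG[OF x] .
  have c1: "C (i x) x" using C1[OF x] .
  have c2: "C x ?e" using Cxd[OF x] .
  have a: "C ?e ?e \<and> m ?e ?e = ?e"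
    using assoc[OF c1 c2] xd[OF x] unfolding gd_def by auto
  have b: "C ?e (i ?e)" using C2[OF eG] .
  have "gd m i ?e = gr m i ?e" using CG[of ?e ?e] a by auto
  have "m (i ?e) (m ?e ?e) = ?e" using canc[of ?e ?e] a by auto
  moreover have "m (i ?e) (m ?e (i ?e)) = i ?e" using canc[OF b] by blast
  moreover have "m ?e (i ?e) = ?e"
  proof -
    have "gd m i x = gr m i ?e" using CG[OF c2] by blast
    then show ?thesis unfolding gr_def by (rule sym)
  qed
  ultimately show ?thesis using a by simp
qed

end

theorem mainTheorem10:
  fixes G :: "'a set" and m :: "'a \<Rightarrow> 'a \<Rightarrow> 'a" and i :: "'a \<Rightarrow> 'a"
    and \<sigma> :: "'a \<Rightarrow> 'a \<Rightarrow> 'k::field"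
    and a b c f :: 'a
  assumes grp: "groupoid G m i"
    and vals: "\<forall>x\<in>G. \<forall>y\<in>G. \<sigma> x y = 0 \<or> \<sigma> x y = 1"
    and diag: "\<forall>e\<in>units G m i. \<sigma> e e = 1"
    and closed: "\<forall>x y. (x, y) \<in> sdom G \<sigma> \<and> (x, y) \<in> composable G m i \<longrightarrow>
        (m x y, i y) \<in> sdom G \<sigma> \<and> (i y, i x) \<in> sdom G \<sigma> \<and> (x, gd m i x) \<in> sdom G \<sigma>"
    and ab: "(a, b) \<in> composable G m i"
    and cf: "(c, f) \<in> composable G m i"
    and zero: "\<sigma> a b = 0"
    and sub: "{i a, b} \<subseteq> {gd m i c, i c, f}"
  shows "\<sigma> c f = 0"
proof (rule ccontr)
  assume nz: "\<sigma> c f \<noteq> 0"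
  interpret gpd G m i using grp by unfold_locales
  let ?D = "\<lambda>x y. (x, y) \<in> sdom G \<sigma>"
  have R1: "?D (m x y) (i y)" "?D (i y) (i x)" "?D x (gd m i x)" if "?D x y" "C x y" for x y
    using closed that by blast+
  have cG: "c \<in> G" and fG: "f \<in> G" and ecf: "gd m i c = gr m i f" using CG[OF cf] by auto
  let ?e = "gd m i c"
  have icG: "i c \<in> G" "i (i c) = c" using inv[OF cG] by auto
  have ifG: "i f \<in> G" "i (i f) = f" using inv[OF fG] by auto
  have ie: "i ?e = ?e" using inv_gd[OF cG] .
  have d0: "?D c f" using nz cG fG by (simp add: sdom_def)
  have d1: "?D c ?e" using R1(3)[OF d0 cf] .
  have d2: "?D (i f) (i c)" using R1(2)[OF d0 cf] .
  have d3: "?D (i f) ?e" using R1(3)[OF d2 Cinv[OF cf]] gd_inv[OF fG] ecf by simp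
  have d4: "?D ?e (i c)" using R1(2)[OF d1 Cxd[OF cG]] ie by simp
  have c4: "C ?e (i c)" using Cinv[OF Cxd[OF cG]] ie by simp
  have d5: "?D (i c) c" using R1(1)[OF d4 c4] dxi[OF cG] icG by simp
  have c5: "C (i c) c" using C1[OF cG] .
  have d6: "?D (i c) (gr m i c)" using R1(3)[OF d5 c5] gd_inv[OF cG] by simp
  have c6: "C (i c) (gr m i c)" using Cxd[OF icG(1)] gd_inv[OF cG] by simp
  have irc: "i (gr m i c) = gr m i c" using inv_gd[OF icG(1)] gd_inv[OF cG] by simp
  have d7: "?D (gr m i c) c" using R1(2)[OF d6 c6] irc icG by simp
  have c7: "C (gr m i c) c" using Cinv[OF c6] irc icG by simp
  have d8: "?D c (i c)" using R1(1)[OF d7 c7] rx[OF cG] by simp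
  have c3: "C (i f) ?e" using Cxd[OF ifG(1)] gd_inv[OF fG] ecf by simp
  have d9: "?D ?e f" using R1(2)[OF d3 c3] ie ifG by simp
  have c9: "C ?e f" using Cinv[OF c3] ie ifG by simp
  have d10: "?D f (i f)" using R1(1)[OF d9 c9] rx[OF fG] ecf by simp
  have d11: "?D f (gd m i f)" using R1(3)[OF d10 C2[OF fG]] .
  have d12: "?D (gd m i f) (i f)" using R1(2)[OF d11 Cxd[OF fG]] inv_gd[OF fG] by simp
  have c12: "C (gd m i f) (i f)" using Cinv[OF Cxd[OF fG]] inv_gd[OF fG] by simp
  have d13: "?D (i f) f" using R1(1)[OF d12 c12] dxi[OF fG] ifG by simp
  have eu: "?e \<in> units G m i" using cG by (simp add: units_def)
  have dee: "\<sigma> ?e ?e \<noteq> 0" using diag eu by simp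
  have aG: "a \<in> G" using CG[OF ab] by simp
  have aa: "a \<in> {?e, c, i f}"
  proof -
    have "i a \<in> {?e, i c, f}" using sub by auto
    then have "i (i a) \<in> {i ?e, i (i c), i f}" by auto
    then show ?thesis using inv[OF aG] ie icG by simp
  qed
  have bb: "b \<in> {?e, i c, f}" using sub by auto
  have "\<sigma> a b \<noteq> 0"
  proof -
    have s: "\<sigma> c f \<noteq> 0" "\<sigma> c ?e \<noteq> 0" "\<sigma> (i f) (i c) \<noteq> 0" "\<sigma> (i f) ?e \<noteq> 0"
      "\<sigma> ?e (i c) \<noteq> 0" "\<sigma> c (i c) \<noteq> 0" "\<sigma> ?e f \<noteq> 0" "\<sigma> (i f) f \<noteq> 0"
      using d0 d1 d2 d3 d4 d8 d9 d13 unfolding sdom_def by simp_all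
    show ?thesis
      using aa bb
      apply (elim insertE emptyE)
      using s dee by simp_all
  qed
  then show False using zero by simp
qed

end
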